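(* Let $K$ be a $b$-complete idempotent semifield and $V$ an idempotent $b$-space over $K$. (i) Every $a$-linear functional defined on a $b$-subspace $W$ of $V$ extends to an $a$-linear functional on $V$. (ii) If $x,y\in V$ and $x\neq y$, then there is an $a$-linear functional $f$ on $V$ with $f(x)\neq f(y)$.
   Context: An idempotent semigroup is a set with a commutative, associative, idempotent operation $\oplus$, ordered by $x\preceq y$ iff $x\oplus y=y$; $\oplus X$, $\wedge X$ are least upper/greatest lower bounds. $b$-complete: every bounded above subset (including $\emptyset$) has a least upper bound; $a$-complete: every subset has least upper and greatest lower bounds; $\mathbf 0=\oplus\emptyset$. The normal completion $\widehat S$ is the completion by cuts. A homomorphism $f$ of $b$-complete semigroups is a $b$-homomorphism if $f(\oplus X)=\oplus f(X)$ for all bounded above $X$, an $a$-homomorphism if it is a $b$-homomorphism extending to a homomorphism of normal completions that preserves least upper bounds of all subsets. An idempotent semiring has commutative idempotent associative $\oplus$, associative $\odot$ distributing on both sides, unit $\mathbf 1$, zero $\mathbf 0$; it is $b$-complete if $b$-complete as a semigroup with $k\odot(\oplus X)=\oplus(k\odot X)$, $(\oplus X)\odot k=\oplus(X\odot k)$ for bounded $X$; a semifield if nonzero elements are invertible. An idempotent semimodule over $K$ is an idempotent semigroup with an associative, bi-distributive action of $K$ with $\mathbf 1\odot x=x$, $\mathbf 0\odot x=\mathbf 0$; it is $b$-complete if $b$-complete as a semigroup and $(\oplus Q)\odot x=\oplus(Q\odot x)$, $k\odot(\oplus X)=\oplus(k\odot X)$ for bounded $Q\subset K$, $X\subset V$;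 $a$-complete if moreover it has a greatest element $\infty$. For $b$-complete semifield $K$, an idempotent $b$-space is a $b$-complete semimodule with $(\wedge Q)\odot x=\wedge(Q\odot x)$ for all nonempty $Q\subset K$ and $x\neq\infty$. A map $p$ is linear if it preserves $\oplus$ and scalar multiplication; $b$-linear if it is moreover a $b$-homomorphism; $a$-linear if it moreover extends to an $a$-homomorphism of normal completions. A linear functional on $V$ is a linear map $V\to\widehat K$. A $b$-subspace of $V$ is a subsemigroup $W\subset V$ closed under multiplication by elements of $K$ such that the embedding $W\to V$ extends to a $b$-linear mapping. *)

theory Defs
  imports Main
begin

definition idem_le :: "('a \<Rightarrow> 'a \<Rightarrow> 'a) \<Rightarrow> 'a \<Rightarrow> 'a \<Rightarrow> bool" where
  "idem_le add x y \<longleftrightarrow> add x y = y"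

definition upper_bounds :: "('a \<Rightarrow> 'a \<Rightarrow> bool) \<Rightarrow> 'a set \<Rightarrow> 'a set \<Rightarrow> 'a set" where
  "upper_bounds le S A = {u \<in> S. \<forall>a\<in>A. le a u}"

definition lower_bounds :: "('a \<Rightarrow> 'a \<Rightarrow> bool) \<Rightarrow> 'a set \<Rightarrow> 'a set \<Rightarrow> 'a set" where
  "lower_bounds le S A = {l \<in> S. \<forall>a\<in>A. le l a}"

definition is_lub :: "('a \<Rightarrow> 'a \<Rightarrow> bool) \<Rightarrow> 'a set \<Rightarrow> 'a set \<Rightarrow> 'a \<Rightarrow> bool" where
  "is_lub le S A s \<longleftrightarrow> s \<in> upper_bounds le S A \<and> (\<forall>u\<in>upper_bounds le S A. le s u)"

definition is_glb :: "('a \<Rightarrow> 'a \<Rightarrow> bool) \<Rightarrow> 'a set \<Rightarrow> 'a set \<Rightarrow> 'a \<Rightarrow> bool" where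
  "is_glb le S A g \<longleftrightarrow> g \<in> lower_bounds le S A \<and> (\<forall>l\<in>lower_bounds le S A. le l g)"

definition is_greatest :: "('a \<Rightarrow> 'a \<Rightarrow> bool) \<Rightarrow> 'a set \<Rightarrow> 'a \<Rightarrow> bool" where
  "is_greatest le S t \<longleftrightarrow> t \<in> S \<and> (\<forall>x\<in>S. le x t)"

definition b_complete_on :: "('a \<Rightarrow> 'a \<Rightarrow> bool) \<Rightarrow> 'a set \<Rightarrow> bool" where
  "b_complete_on le S \<longleftrightarrow>
     (\<forall>A. A \<subseteq> S \<longrightarrow> upper_bounds le S A \<noteq> {} \<longrightarrow> (\<exists>s. is_lub le S A s))"

definition cuts :: "('a \<Rightarrow> 'a \<Rightarrow> bool) \<Rightarrow> 'a set \<Rightarrow> 'a set set" where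
  "cuts le S = {A. A \<subseteq> S \<and> A = lower_bounds le S (upper_bounds le S A)}"

text \<open>Least upper bound of a family of cuts (cuts are ordered by inclusion).\<close>
definition cut_sup :: "('a \<Rightarrow> 'a \<Rightarrow> bool) \<Rightarrow> 'a set \<Rightarrow> 'a set set \<Rightarrow> 'a set" where
  "cut_sup le S \<A> = lower_bounds le S (upper_bounds le S (\<Union>\<A>))"

definition principal_cut :: "('a \<Rightarrow> 'a \<Rightarrow> bool) \<Rightarrow> 'a set \<Rightarrow> 'a \<Rightarrow> 'a set" where
  "principal_cut le S x = lower_bounds le S {x}"

definition idem_semigroup :: "('a \<Rightarrow> 'a \<Rightarrow> 'a) \<Rightarrow> bool" where
  "idem_semigroup add \<longleftrightarrow>
     (\<forall>x y z. add (add x y) z = add x (add y z)) \<and> (\<forall>x y. add x y = add y x) \<and> (\<forall>x. add x x = x)"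

definition idem_semiring :: "('k \<Rightarrow> 'k \<Rightarrow> 'k) \<Rightarrow> ('k \<Rightarrow> 'k \<Rightarrow> 'k) \<Rightarrow> 'k \<Rightarrow> 'k \<Rightarrow> bool" where
  "idem_semiring addK mulK zeroK oneK \<longleftrightarrow>
     idem_semigroup addK \<and>
     (\<forall>x y z. mulK (mulK x y) z = mulK x (mulK y z)) \<and>
     (\<forall>x y z. mulK x (addK y z) = addK (mulK x y) (mulK x z)) \<and>
     (\<forall>x y z. mulK (addK x y) z = addK (mulK x z) (mulK y z)) \<and>
     (\<forall>x. mulK oneK x = x \<and> mulK x oneK = x) \<and>
     (\<forall>x. addK zeroK x = x) \<and>
     (\<forall>x. mulK zeroK x = zeroK \<and> mulK x zeroK = zeroK)"

definition b_complete_semiring :: "('k \<Rightarrow> 'k \<Rightarrow> 'k) \<Rightarrow> ('k \<Rightarrow> 'k \<Rightarrow> 'k) \<Rightarrow> 'k \<Rightarrow> 'k \<Rightarrow> bool" where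
  "b_complete_semiring addK mulK zeroK oneK \<longleftrightarrow>
     idem_semiring addK mulK zeroK oneK \<and>
     b_complete_on (idem_le addK) UNIV \<and>
     (\<forall>k X s. is_lub (idem_le addK) UNIV X s \<longrightarrow>
        is_lub (idem_le addK) UNIV (mulK k ` X) (mulK k s) \<and>
        is_lub (idem_le addK) UNIV ((\<lambda>x. mulK x k) ` X) (mulK s k))"

definition semifield :: "('k \<Rightarrow> 'k \<Rightarrow> 'k) \<Rightarrow> 'k \<Rightarrow> 'k \<Rightarrow> bool" where
  "semifield mulK zeroK oneK \<longleftrightarrow> (\<forall>x. x \<noteq> zeroK \<longrightarrow> (\<exists>y. mulK x y = oneK \<and> mulK y x = oneK))"

definition idem_semimodule ::
  "('k \<Rightarrow> 'k \<Rightarrow> 'k) \<Rightarrow> ('k \<Rightarrow> 'k \<Rightarrow> 'k) \<Rightarrow> 'k \<Rightarrow> 'k \<Rightarrow> ('v \<Rightarrow> 'v \<Rightarrow> 'v) \<Rightarrow> ('k \<Rightarrow> 'v \<Rightarrow> 'v) \<Rightarrow> bool" where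
  "idem_semimodule addK mulK zeroK oneK addV smul \<longleftrightarrow>
     idem_semiring addK mulK zeroK oneK \<and> idem_semigroup addV \<and>
     (\<forall>k l x. smul (mulK k l) x = smul k (smul l x)) \<and>
     (\<forall>k x y. smul k (addV x y) = addV (smul k x) (smul k y)) \<and>
     (\<forall>k l x. smul (addK k l) x = addV (smul k x) (smul l x)) \<and>
     (\<forall>x. smul oneK x = x) \<and>
     (\<forall>x y. addV (smul zeroK x) y = y)"

definition b_complete_semimodule ::
  "('k \<Rightarrow> 'k \<Rightarrow> 'k) \<Rightarrow> ('k \<Rightarrow> 'k \<Rightarrow> 'k) \<Rightarrow> 'k \<Rightarrow> 'k \<Rightarrow> ('v \<Rightarrow> 'v \<Rightarrow> 'v) \<Rightarrow> ('k \<Rightarrow> 'v \<Rightarrow> 'v) \<Rightarrow> bool" where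
  "b_complete_semimodule addK mulK zeroK oneK addV smul \<longleftrightarrow>
     idem_semimodule addK mulK zeroK oneK addV smul \<and>
     b_complete_on (idem_le addV) UNIV \<and>
     (\<forall>Q s x. is_lub (idem_le addK) UNIV Q s \<longrightarrow>
        is_lub (idem_le addV) UNIV ((\<lambda>q. smul q x) ` Q) (smul s x)) \<and>
     (\<forall>k X s. is_lub (idem_le addV) UNIV X s \<longrightarrow>
        is_lub (idem_le addV) UNIV (smul k ` X) (smul k s))"

text \<open>Idempotent b-space (over a b-complete semifield, assumed separately).
  The condition "x different from infinity" means: x is not the greatest element of V.\<close>
definition b_space ::
  "('k \<Rightarrow> 'k \<Rightarrow> 'k) \<Rightarrow> ('k \<Rightarrow> 'k \<Rightarrow> 'k) \<Rightarrow> 'k \<Rightarrow> 'k \<Rightarrow> ('v \<Rightarrow> 'v \<Rightarrow> 'v) \<Rightarrow> ('k \<Rightarrow> 'v \<Rightarrow> 'v) \<Rightarrow> bool" where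
  "b_space addK mulK zeroK oneK addV smul \<longleftrightarrow>
     b_complete_semimodule addK mulK zeroK oneK addV smul \<and>
     (\<forall>Q x g. Q \<noteq> {} \<longrightarrow> \<not> is_greatest (idem_le addV) UNIV x \<longrightarrow>
        is_glb (idem_le addK) UNIV Q g \<longrightarrow>
        is_glb (idem_le addV) UNIV ((\<lambda>q. smul q x) ` Q) (smul g x))"

text \<open>b-subspace: a subsemigroup closed under scalars such that the embedding into V is
  b-linear, i.e. W is b-complete in the induced order and the embedding preserves
  least upper bounds of subsets bounded in W.\<close>
definition b_subspace :: "('v \<Rightarrow> 'v \<Rightarrow> 'v) \<Rightarrow> ('k \<Rightarrow> 'v \<Rightarrow> 'v) \<Rightarrow> 'v set \<Rightarrow> bool" where
  "b_subspace addV smul W \<longleftrightarrow>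
     W \<noteq> {} \<and>
     (\<forall>x\<in>W. \<forall>y\<in>W. addV x y \<in> W) \<and>
     (\<forall>k. \<forall>x\<in>W. smul k x \<in> W) \<and>
     b_complete_on (idem_le addV) W \<and>
     (\<forall>X s. X \<subseteq> W \<longrightarrow> is_lub (idem_le addV) W X s \<longrightarrow> is_lub (idem_le addV) UNIV X s)"

text \<open>Khat = normal completion of K (cuts of K, ordered by inclusion); sup of a family of cuts;
  the action of K on Khat (extension of multiplication).\<close>
definition khat_sup :: "('k \<Rightarrow> 'k \<Rightarrow> 'k) \<Rightarrow> 'k set set \<Rightarrow> 'k set" where
  "khat_sup addK \<A> = cut_sup (idem_le addK) UNIV \<A>"

definition khat_act :: "('k \<Rightarrow> 'k \<Rightarrow> 'k) \<Rightarrow> ('k \<Rightarrow> 'k \<Rightarrow> 'k) \<Rightarrow> 'k \<Rightarrow> 'k set \<Rightarrow> 'k set" where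
  "khat_act addK mulK k A = cut_sup (idem_le addK) UNIV {mulK k ` A}"

definition linear_functional ::
  "('k \<Rightarrow> 'k \<Rightarrow> 'k) \<Rightarrow> ('k \<Rightarrow> 'k \<Rightarrow> 'k) \<Rightarrow> ('v \<Rightarrow> 'v \<Rightarrow> 'v) \<Rightarrow> ('k \<Rightarrow> 'v \<Rightarrow> 'v) \<Rightarrow> 'v set \<Rightarrow> ('v \<Rightarrow> 'k set) \<Rightarrow> bool" where
  "linear_functional addK mulK addV smul W f \<longleftrightarrow>
     (\<forall>x\<in>W. f x \<in> cuts (idem_le addK) UNIV) \<and>
     (\<forall>x\<in>W. \<forall>y\<in>W. f (addV x y) = khat_sup addK {f x, f y}) \<and>
     (\<forall>k. \<forall>x\<in>W. f (smul k x) = khat_act addK mulK k (f x))"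

definition b_linear_functional ::
  "('k \<Rightarrow> 'k \<Rightarrow> 'k) \<Rightarrow> ('k \<Rightarrow> 'k \<Rightarrow> 'k) \<Rightarrow> ('v \<Rightarrow> 'v \<Rightarrow> 'v) \<Rightarrow> ('k \<Rightarrow> 'v \<Rightarrow> 'v) \<Rightarrow> 'v set \<Rightarrow> ('v \<Rightarrow> 'k set) \<Rightarrow> bool" where
  "b_linear_functional addK mulK addV smul W f \<longleftrightarrow>
     linear_functional addK mulK addV smul W f \<and>
     (\<forall>X s. X \<subseteq> W \<longrightarrow> is_lub (idem_le addV) W X s \<longrightarrow> f s = khat_sup addK (f ` X))"

text \<open>a-linear: b-linear and extends (along the canonical embedding) to a map of the normal
  completions preserving least upper bounds of all subsets.  The completion of Khat is
  identified with Khat itself (Khat is a complete lattice).\<close>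
definition a_linear_functional ::
  "('k \<Rightarrow> 'k \<Rightarrow> 'k) \<Rightarrow> ('k \<Rightarrow> 'k \<Rightarrow> 'k) \<Rightarrow> ('v \<Rightarrow> 'v \<Rightarrow> 'v) \<Rightarrow> ('k \<Rightarrow> 'v \<Rightarrow> 'v) \<Rightarrow> 'v set \<Rightarrow> ('v \<Rightarrow> 'k set) \<Rightarrow> bool" where
  "a_linear_functional addK mulK addV smul W f \<longleftrightarrow>
     b_linear_functional addK mulK addV smul W f \<and>
     (\<exists>F :: 'v set \<Rightarrow> 'k set.
        (\<forall>x\<in>W. F (principal_cut (idem_le addV) W x) = f x) \<and>
        (\<forall>\<A>. \<A> \<subseteq> cuts (idem_le addV) W \<longrightarrow>
           F (cut_sup (idem_le addV) W \<A>) = khat_sup addK (F ` \<A>)))"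

end

theory Submission
  imports Defs
begin

locale ctx =
  fixes addK mulK :: "'k \<Rightarrow> 'k \<Rightarrow> 'k" and zeroK oneK :: 'k
    and addV :: "'v \<Rightarrow> 'v \<Rightarrow> 'v" and smul :: "'k \<Rightarrow> 'v \<Rightarrow> 'v"
  assumes K: "b_complete_semiring addK mulK zeroK oneK"
    and SF: "semifield mulK zeroK oneK"
    and V: "b_space addK mulK zeroK oneK addV smul"
begin

abbreviation leK where "leK \<equiv> idem_le addK"
abbreviation leV where "leV \<equiv> idem_le addV"
abbreviation lowK where "lowK \<equiv> lower_bounds leK UNIV"
abbreviation upK where "upK \<equiv> upper_bounds leK UNIV"

lemma SR: "idem_semiring addK mulK zeroK oneK" using K by (simp add: b_complete_semiring_def)
lemma SM: "idem_semimodule addK mulK zeroK oneK addV smul"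
  using V by (simp add: b_space_def b_complete_semimodule_def)

lemma addK_assoc: "addK (addK x y) z = addK x (addK y z)"
  using SR unfolding idem_semiring_def idem_semigroup_def by blast
lemma addK_comm: "addK x y = addK y x"
  using SR unfolding idem_semiring_def idem_semigroup_def by blast
lemma addK_idem: "addK x x = x"
  using SR unfolding idem_semiring_def idem_semigroup_def by blast
lemma mulK_assoc: "mulK (mulK x y) z = mulK x (mulK y z)"
  using SR by (simp add: idem_semiring_def)
lemma distL: "mulK x (addK y z) = addK (mulK x y) (mulK x z)"
  using SR by (simp add: idem_semiring_def)
lemma distR: "mulK (addK x y) z = addK (mulK x z) (mulK y z)"
  using SR by (simp add: idem_semiring_def)
lemma one_l[simp]: "mulK oneK x = x" and one_r[simp]: "mulK x oneK = x"
  using SR by (simp_all add: idem_semiring_def)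
lemma zero_add[simp]: "addK zeroK x = x"
  using SR by (simp add: idem_semiring_def)
lemma zero_l[simp]: "mulK zeroK x = zeroK" and zero_r[simp]: "mulK x zeroK = zeroK"
  using SR by (simp_all add: idem_semiring_def)

lemma addV_assoc: "addV (addV x y) z = addV x (addV y z)"
  using SM unfolding idem_semimodule_def idem_semigroup_def by blast
lemma addV_comm: "addV x y = addV y x"
  using SM unfolding idem_semimodule_def idem_semigroup_def by blast
lemma addV_idem: "addV x x = x"
  using SM unfolding idem_semimodule_def idem_semigroup_def by blast
lemma smul_mul: "smul (mulK k l) x = smul k (smul l x)"
  using SM by (simp add: idem_semimodule_def)
lemma smul_add: "smul k (addV x y) = addV (smul k x) (smul k y)"
  using SM by (simp add: idem_semimodule_def)
lemma add_smul: "smul (addK k l) x = addV (smul k x) (smul l x)"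
  using SM by (simp add: idem_semimodule_def)
lemma smul_one[simp]: "smul oneK x = x"
  using SM by (simp add: idem_semimodule_def)
lemma smul_zero_add[simp]: "addV (smul zeroK x) y = y"
  using SM by (simp add: idem_semimodule_def)

lemma inv_ex: "k \<noteq> zeroK \<Longrightarrow> \<exists>j. mulK k j = oneK \<and> mulK j k = oneK"
  using SF by (simp add: semifield_def)

lemma leK_refl[simp]: "leK x x" by (simp add: idem_le_def addK_idem)
lemma leK_trans: "leK x y \<Longrightarrow> leK y z \<Longrightarrow> leK x z"
  by (simp add: idem_le_def) (metis addK_assoc)
lemma leK_antisym: "leK x y \<Longrightarrow> leK y x \<Longrightarrow> x = y"
  by (simp add: idem_le_def) (metis addK_comm)
lemma leK_zero[simp]: "leK zeroK x" by (simp add: idem_le_def)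
lemma leK_add1: "leK x (addK x y)" by (simp add: idem_le_def) (metis addK_assoc addK_idem)
lemma leK_add2: "leK y (addK x y)" by (metis addK_comm leK_add1)
lemma leK_addI: "leK x z \<Longrightarrow> leK y z \<Longrightarrow> leK (addK x y) z"
  by (simp add: idem_le_def) (metis addK_assoc)
lemma mulK_monoL: "leK a b \<Longrightarrow> leK (mulK c a) (mulK c b)"
  by (simp add: idem_le_def) (metis distL)
lemma mulK_monoR: "leK a b \<Longrightarrow> leK (mulK a c) (mulK b c)"
  by (simp add: idem_le_def) (metis distR)

lemma leV_refl[simp]: "leV x x" by (simp add: idem_le_def addV_idem)
lemma leV_trans: "leV x y \<Longrightarrow> leV y z \<Longrightarrow> leV x z"
  by (simp add: idem_le_def) (metis addV_assoc)
lemma leV_antisym: "leV x y \<Longrightarrow> leV y x \<Longrightarrow> x = y"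
  by (simp add: idem_le_def) (metis addV_comm)
lemma zeroV_eq: "smul zeroK x = smul zeroK y"
  by (metis smul_zero_add addV_comm)
lemma leV_zero[simp]: "leV (smul zeroK x) y" by (simp add: idem_le_def)
lemma leV_add1: "leV x (addV x y)" by (simp add: idem_le_def) (metis addV_assoc addV_idem)
lemma leV_add2: "leV y (addV x y)" by (metis addV_comm leV_add1)
lemma leV_addI: "leV x z \<Longrightarrow> leV y z \<Longrightarrow> leV (addV x y) z"
  by (simp add: idem_le_def) (metis addV_assoc)
lemma smul_monoV: "leV x y \<Longrightarrow> leV (smul k x) (smul k y)"
  by (simp add: idem_le_def) (metis smul_add)
lemma smul_monoK: "leK k l \<Longrightarrow> leV (smul k x) (smul l x)"
  by (simp add: idem_le_def) (metis add_smul)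
lemma smul_zeroV[simp]: "smul k (smul zeroK x) = smul zeroK x"
  by (metis smul_mul zero_r)


definition inv :: "'k \<Rightarrow> 'k" where "inv k = (SOME j. mulK k j = oneK \<and> mulK j k = oneK)"

lemma inv_r: "k \<noteq> zeroK \<Longrightarrow> mulK k (inv k) = oneK"
  unfolding inv_def by (rule someI2_ex[OF inv_ex]) auto
lemma inv_l: "k \<noteq> zeroK \<Longrightarrow> mulK (inv k) k = oneK"
  unfolding inv_def by (rule someI2_ex[OF inv_ex]) auto
lemma one_ne_zero_if: "k \<noteq> zeroK \<Longrightarrow> oneK \<noteq> zeroK"
  by (metis one_r zero_r)
lemma inv_nz: "k \<noteq> zeroK \<Longrightarrow> inv k \<noteq> zeroK"
  by (metis inv_r zero_r one_r)
lemma mul_inv_cancel: "k \<noteq> zeroK \<Longrightarrow> mulK k (mulK (inv k) c) = c"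
  by (metis inv_r mulK_assoc one_l)
lemma inv_mul_cancel: "k \<noteq> zeroK \<Longrightarrow> mulK (inv k) (mulK k c) = c"
  by (metis inv_l mulK_assoc one_l)
lemma le_mul_iff: "k \<noteq> zeroK \<Longrightarrow> leK c (mulK k r) \<longleftrightarrow> leK (mulK (inv k) c) r"
  by (metis mulK_monoL mul_inv_cancel inv_mul_cancel)
lemma mul_le_iff: "k \<noteq> zeroK \<Longrightarrow> leK (mulK k c) r \<longleftrightarrow> leK c (mulK (inv k) r)"
  by (metis mulK_monoL mul_inv_cancel inv_mul_cancel)
lemma smul_inv_cancel: "k \<noteq> zeroK \<Longrightarrow> smul k (smul (inv k) x) = x"
  by (metis inv_r smul_mul smul_one)
lemma inv_smul_cancel: "k \<noteq> zeroK \<Longrightarrow> smul (inv k) (smul k x) = x"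
  by (metis inv_l smul_mul smul_one)

lemma lowK_iff: "c \<in> lowK S \<longleftrightarrow> (\<forall>a\<in>S. leK c a)"
  by (simp add: lower_bounds_def)
lemma upK_iff: "u \<in> upK S \<longleftrightarrow> (\<forall>a\<in>S. leK a u)"
  by (simp add: upper_bounds_def)
lemma zero_lowK[simp]: "zeroK \<in> lowK S" by (simp add: lowK_iff)
lemma lowK_UNIV: "lowK UNIV = {zeroK}"
  by (auto simp: lowK_iff intro: leK_antisym)
lemma upK_zero: "upK {zeroK} = UNIV" by (auto simp: upK_iff)
lemma lowK_zero: "zeroK \<in> S \<Longrightarrow> lowK S = {zeroK}"
  by (auto simp: lowK_iff intro: leK_antisym)
lemma lowK_upK_lowK: "lowK (upK (lowK S)) = lowK S"
  by (auto simp: lowK_iff upK_iff)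
lemma upK_lowK_upK: "upK (lowK (upK S)) = upK S"
  by (auto simp: lowK_iff upK_iff)
lemma sub_lowK_upK: "S \<subseteq> lowK (upK S)"
  by (auto simp: lowK_iff upK_iff)

lemma khat_sup_eq: "khat_sup addK A = lowK (upK (\<Union>A))"
  by (simp add: khat_sup_def cut_sup_def)
lemma khat_act_eq: "khat_act addK mulK k A = lowK (upK (mulK k ` A))"
  by (simp add: khat_act_def cut_sup_def)

lemma lowK_cong:
  assumes "U \<subseteq> A \<union> {u. \<forall>c. leK c u}" "A \<subseteq> U" shows "lowK A = lowK U"
proof (rule set_eqI)
  fix c show "c \<in> lowK A \<longleftrightarrow> c \<in> lowK U"
  proof
    assume "c \<in> lowK A"
    then have "\<forall>a\<in>A. leK c a" by (simp add: lowK_iff)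
    then have "\<forall>u\<in>U. leK c u" using assms(1) by auto
    then show "c \<in> lowK U" by (simp add: lowK_iff)
  next
    assume "c \<in> lowK U"
    then have "\<forall>a\<in>U. leK c a" by (simp add: lowK_iff)
    then have "\<forall>u\<in>A. leK c u" using assms(2) by auto
    then show "c \<in> lowK A" by (simp add: lowK_iff)
  qed
qed

lemma khat_sup_assoc:
  "lowK (upK (\<Union>i\<in>I. lowK (upK (T i)))) = lowK (upK (\<Union>i\<in>I. T i))"
proof -
  have "upK (\<Union>i\<in>I. lowK (upK (T i))) = upK (\<Union>i\<in>I. T i)"
    by (auto simp: upK_iff lowK_iff)
  then show ?thesis by simp
qed

lemma lowK_scale: "k \<noteq> zeroK \<Longrightarrow> lowK (mulK k ` R) = lowK (upK (mulK k ` lowK R))"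
proof (rule set_eqI)
  fix c assume k: "k \<noteq> zeroK"
  have "c \<in> lowK (mulK k ` R) \<longleftrightarrow> mulK (inv k) c \<in> lowK R"
    using k by (auto simp: lowK_iff le_mul_iff)
  also have "\<dots> \<longleftrightarrow> mulK (inv k) c \<in> lowK (upK (lowK R))" by (simp add: lowK_upK_lowK)
  also have "\<dots> \<longleftrightarrow> c \<in> lowK (upK (mulK k ` lowK R))"
  proof
    assume A: "mulK (inv k) c \<in> lowK (upK (lowK R))"
    show "c \<in> lowK (upK (mulK k ` lowK R))"
    proof (unfold lowK_iff, intro ballI)
      fix u assume "u \<in> upK (mulK k ` lowK R)"
      then have "mulK (inv k) u \<in> upK (lowK R)"
        using k by (auto simp: upK_iff mul_le_iff)
      then have "leK (mulK (inv k) c) (mulK (inv k) u)" using A by (simp add: lowK_iff)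
      then show "leK c u" using k by (metis mul_inv_cancel mulK_monoL)
    qed
  next
    assume A: "c \<in> lowK (upK (mulK k ` lowK R))"
    show "mulK (inv k) c \<in> lowK (upK (lowK R))"
    proof (unfold lowK_iff, intro ballI)
      fix v assume "v \<in> upK (lowK R)"
      then have "mulK k v \<in> upK (mulK k ` lowK R)"
        by (auto simp: upK_iff mulK_monoL)
      then have "leK c (mulK k v)" using A by (simp add: lowK_iff)
      then show "leK (mulK (inv k) c) v" using k le_mul_iff by blast
    qed
  qed
  finally show "c \<in> lowK (mulK k ` R) \<longleftrightarrow> c \<in> lowK (upK (mulK k ` lowK R))" .
qed


lemma Vbc: "b_complete_on leV UNIV"
  using V by (simp add: b_space_def b_complete_semimodule_def)

lemma lub_upper: "is_lub leV UNIV X s \<Longrightarrow> x \<in> X \<Longrightarrow> leV x s"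
  by (simp add: is_lub_def upper_bounds_def)
lemma lub_least: "is_lub leV UNIV X s \<Longrightarrow> (\<forall>x\<in>X. leV x u) \<Longrightarrow> leV s u"
  by (simp add: is_lub_def upper_bounds_def)

lemma generic_alin:
  fixes R :: "'v \<Rightarrow> 'k set"
  assumes H1: "\<And>x. R x = {} \<or> (\<exists>r. R x = {k. leK r k})"
    and H2: "\<And>x y. R (addV x y) = R x \<inter> R y"
    and H3: "\<And>k x. k \<noteq> zeroK \<Longrightarrow> R (smul k x) = mulK k ` R x"
    and H3b: "\<And>x. zeroK \<in> R (smul zeroK x)"
    and H4: "\<And>X s u. is_lub leV UNIV X s \<Longrightarrow> (\<forall>x\<in>X. u \<in> R x) \<Longrightarrow> u \<in> R s"
    and H5: "\<And>S u y. upper_bounds leV UNIV S = {} \<Longrightarrow> \<forall>x\<in>S. u \<in> R x \<Longrightarrow> u \<in> R y"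
  shows "a_linear_functional addK mulK addV smul UNIV (\<lambda>x. lowK (R x))"
proof -
  define g where "g x = lowK (R x)" for x
  have L: "u \<in> R x \<or> (\<forall>c. leK c u)" if "\<forall>c\<in>g x. leK c u" for u x
  proof (cases "R x = {}")
    case True
    then show ?thesis using that by (simp add: g_def lowK_iff)
  next
    case False
    then obtain r where r: "R x = {k. leK r k}" using H1 by blast
    then have "r \<in> g x" by (simp add: g_def lowK_iff)
    then have "leK r u" using that by blast
    then show ?thesis using r by simp
  qed
  have GS: "lowK (\<Inter>x\<in>X. R x) = khat_sup addK (g ` X)" for X
  proof -
    have "upK (\<Union>(g ` X)) \<subseteq> (\<Inter>x\<in>X. R x) \<union> {u. \<forall>c. leK c u}"
    proof
      fix u assume u: "u \<in> upK (\<Union>(g ` X))"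
      show "u \<in> (\<Inter>x\<in>X. R x) \<union> {u. \<forall>c. leK c u}"
      proof (cases "\<forall>c. leK c u")
        case False
        have "u \<in> R x" if "x \<in> X" for x
        proof -
          have "\<forall>c\<in>g x. leK c u" using u that by (auto simp: upK_iff)
          then show ?thesis using L[of x u] False by blast
        qed
        then have "\<forall>x\<in>X. u \<in> R x" by blast
        then show ?thesis by blast
      qed simp
    qed
    moreover have "(\<Inter>x\<in>X. R x) \<subseteq> upK (\<Union>(g ` X))"
      by (auto simp: upK_iff g_def lowK_iff)
    ultimately show ?thesis unfolding khat_sup_eq by (rule lowK_cong)
  qed
  have monoR: "R s \<subseteq> R x" if "leV x s" for x s
  proof -
    have e: "addV x s = s" using that by (simp add: idem_le_def)
    have "R s = R x \<inter> R s" using H2[of x s] by (simp only: e)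
    then show ?thesis by blast
  qed
  have blin: "g s = khat_sup addK (g ` X)" if "is_lub leV UNIV X s" for X s
  proof -
    have "R s \<subseteq> R x" if "x \<in> X" for x
      using monoR[OF lub_upper[OF \<open>is_lub leV UNIV X s\<close> that]] .
    moreover have "(\<Inter>x\<in>X. R x) \<subseteq> R s"
      using H4[OF that] by blast
    ultimately have "R s = (\<Inter>x\<in>X. R x)" by blast
    then show ?thesis using GS by (simp add: g_def)
  qed
  have lin: "linear_functional addK mulK addV smul UNIV g"
    unfolding linear_functional_def
  proof (intro conjI ballI allI)
    fix x show "g x \<in> cuts leK UNIV"
      by (simp add: cuts_def g_def lowK_upK_lowK)
  next
    fix x y
    have "R (addV x y) = (\<Inter>z\<in>{x,y}. R z)" using H2 by simp
    then show "g (addV x y) = khat_sup addK {g x, g y}"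
      using GS[of "{x,y}"] by (simp add: g_def)
  next
    fix k x
    show "g (smul k x) = khat_act addK mulK k (g x)"
    proof (cases "k = zeroK")
      case True
      have "zeroK \<in> g x" by (simp add: g_def)
      then have "mulK zeroK ` g x = {zeroK}" by force
      then show ?thesis using True H3b[of x]
        by (simp add: khat_act_eq g_def lowK_zero upK_zero lowK_UNIV)
    next
      case False
      then show ?thesis using H3 lowK_scale by (simp add: khat_act_eq g_def)
    qed
  qed
  have bl: "b_linear_functional addK mulK addV smul UNIV g"
    unfolding b_linear_functional_def using lin blin by blast
  define F where "F A = khat_sup addK (g ` A)" for A
  have pc: "principal_cut leV UNIV x = {z. leV z x}" for x
    by (simp add: principal_cut_def lower_bounds_def)
  have lub_pc: "is_lub leV UNIV {z. leV z x} x" for x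
    by (auto simp: is_lub_def upper_bounds_def)
  have F1: "F (principal_cut leV UNIV x) = g x" for x
    using blin[OF lub_pc[of x]] by (simp add: F_def pc)
  have F2: "F (cut_sup leV UNIV \<A>) = khat_sup addK (F ` \<A>)" for \<A>
  proof -
    define S where "S = \<Union>\<A>"
    have rhs: "khat_sup addK (F ` \<A>) = khat_sup addK (g ` S)"
    proof -
      have "khat_sup addK (F ` \<A>) = lowK (upK (\<Union>A\<in>\<A>. lowK (upK (\<Union>(g ` A)))))"
        by (simp add: F_def khat_sup_eq)
      also have "\<dots> = lowK (upK (\<Union>A\<in>\<A>. \<Union>(g ` A)))" by (rule khat_sup_assoc)
      also have "\<dots> = khat_sup addK (g ` S)" by (simp add: khat_sup_eq S_def)
      finally show ?thesis .
    qed
    show ?thesis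
    proof (cases "upper_bounds leV UNIV S = {}")
      case True
      have cs: "cut_sup leV UNIV \<A> = UNIV"
        using True by (simp add: cut_sup_def S_def lower_bounds_def)
      have "upK (\<Union>(g ` UNIV)) = upK (\<Union>(g ` S))"
      proof
        show "upK (\<Union>(g ` UNIV)) \<subseteq> upK (\<Union>(g ` S))" by (auto simp: upK_iff)
      next
        show "upK (\<Union>(g ` S)) \<subseteq> upK (\<Union>(g ` UNIV))"
        proof
          fix u assume u: "u \<in> upK (\<Union>(g ` S))"
          show "u \<in> upK (\<Union>(g ` UNIV))"
          proof (cases "\<forall>c. leK c u")
            case True then show ?thesis by (simp add: upK_iff)
          next
            case False
            have "u \<in> R x" if "x \<in> S" for x
            proof -
              have "\<forall>c\<in>g x. leK c u" using u that by (auto simp: upK_iff)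
              then show ?thesis using L[of x u] False by blast
            qed
            then have "\<forall>x\<in>S. u \<in> R x" by blast
            then have "\<forall>y. u \<in> R y" using H5[OF True] by blast
            then show ?thesis by (auto simp: upK_iff g_def lowK_iff)
          qed
        qed
      qed
      then show ?thesis using cs rhs by (simp add: F_def khat_sup_eq)
    next
      case False
      then obtain s where s: "is_lub leV UNIV S s"
        using Vbc unfolding b_complete_on_def by blast
      have "upper_bounds leV UNIV S = {u. leV s u}"
        using s unfolding is_lub_def upper_bounds_def by (auto dest: leV_trans)
      then have "cut_sup leV UNIV \<A> = {z. leV z s}"
        by (auto simp: cut_sup_def S_def lower_bounds_def) (erule (1) leV_trans)
      then have "F (cut_sup leV UNIV \<A>) = g s"
        using blin[OF lub_pc[of s]] by (simp add: F_def)
      also have "\<dots> = khat_sup addK (g ` S)" using blin[OF s] .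
      finally show ?thesis using rhs by simp
    qed
  qed
  show ?thesis unfolding a_linear_functional_def g_def[symmetric]
    using bl F1 F2 by blast
qed


lemma mulK_surj: "k \<noteq> zeroK \<Longrightarrow> mulK k ` UNIV = UNIV"
  by (metis mul_inv_cancel surj_def)

lemma alin_zero: "a_linear_functional addK mulK addV smul UNIV (\<lambda>x. lowK UNIV)"
proof (rule generic_alin)
  show "\<And>x. UNIV = {} \<or> (\<exists>r. (UNIV::'k set) = {k. leK r k})" by (rule disjI2, rule exI[of _ zeroK]) simp
  show "\<And>k x. k \<noteq> zeroK \<Longrightarrow> (UNIV::'k set) = mulK k ` UNIV" using mulK_surj by simp
qed auto

lemma leV_add_iff: "leV (addV x y) d \<longleftrightarrow> leV x d \<and> leV y d"
  by (meson leV_add1 leV_add2 leV_addI leV_trans)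

lemma alin_D:
  assumes dinv: "\<forall>k. leV (smul k d) d"
  shows "a_linear_functional addK mulK addV smul UNIV
           (\<lambda>x. lowK (if leV x d then UNIV else {}))"
proof (rule generic_alin)
  fix x show "(if leV x d then UNIV else {}) = {} \<or> (\<exists>r. (if leV x d then UNIV else {}) = {k. leK r k})"
    by (cases "leV x d") (auto intro: exI[of _ zeroK])
next
  fix x y show "(if leV (addV x y) d then UNIV else {}) =
       (if leV x d then UNIV else {}) \<inter> (if leV y d then UNIV else {})"
    by (simp add: leV_add_iff)
next
  fix k x assume k: "k \<noteq> zeroK"
  have "leV (smul k x) d \<longleftrightarrow> leV x d"
  proof
    assume "leV (smul k x) d"
    then have "leV (smul (inv k) (smul k x)) (smul (inv k) d)" by (rule smul_monoV)
    then have "leV x (smul (inv k) d)" using k by (simp add: inv_smul_cancel)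
    then show "leV x d" using dinv leV_trans by blast
  next
    assume "leV x d" then have "leV (smul k x) (smul k d)" by (rule smul_monoV)
    then show "leV (smul k x) d" using dinv leV_trans by blast
  qed
  then show "(if leV (smul k x) d then UNIV else {}) = mulK k ` (if leV x d then UNIV else {})"
    using mulK_surj[OF k] by simp
next
  fix x show "zeroK \<in> (if leV (smul zeroK x) d then UNIV else {})" by simp
next
  fix X s u assume s: "is_lub leV UNIV X s" and "\<forall>x\<in>X. u \<in> (if leV x d then UNIV else {})"
  then have "\<forall>x\<in>X. leV x d" by (simp split: if_splits)
  then show "u \<in> (if leV s d then UNIV else {})" using lub_least[OF s] by simp
next
  fix S u y assume S: "upper_bounds leV UNIV S = {}" and "\<forall>x\<in>S. u \<in> (if leV x d then UNIV else {})"
  then have "\<forall>x\<in>S. leV x d" by (simp split: if_splits)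
  then have "d \<in> upper_bounds leV UNIV S" by (simp add: upper_bounds_def)
  then show "u \<in> (if leV y d then UNIV else {})" using S by simp
qed

lemma Kbc: "b_complete_on leK UNIV"
  using K by (simp add: b_complete_semiring_def)

lemma bspace_glb: "Q \<noteq> {} \<Longrightarrow> \<not> is_greatest leV UNIV x \<Longrightarrow> is_glb leK UNIV Q g \<Longrightarrow>
   is_glb leV UNIV ((\<lambda>q. smul q x) ` Q) (smul g x)"
  using V by (simp add: b_space_def)

lemma glb_ex: assumes "Q \<noteq> {}" shows "\<exists>g. is_glb leK UNIV Q g"
proof -
  obtain q where q: "q \<in> Q" using assms by blast
  have "q \<in> upK (lowK Q)" using q by (simp add: upK_iff lowK_iff)
  then obtain g where g: "is_lub leK UNIV (lowK Q) g"
    using Kbc unfolding b_complete_on_def by blast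
  have "is_glb leK UNIV Q g"
    using g unfolding is_lub_def is_glb_def
    by (auto simp: upper_bounds_def lower_bounds_def)
  then show ?thesis by blast
qed

lemma R_principal:
  assumes ng: "\<not> is_greatest leV UNIV y"
  shows "{k. leV x (smul k y)} = {} \<or> (\<exists>r. {k. leV x (smul k y)} = {k. leK r k})"
proof (cases "{k. leV x (smul k y)} = {}")
    case False
    then obtain g where g: "is_glb leK UNIV {k. leV x (smul k y)} g" using glb_ex[OF False] by blast
    have G: "is_glb leV UNIV ((\<lambda>q. smul q y) ` {k. leV x (smul k y)}) (smul g y)"
      by (rule bspace_glb[OF False ng g])
    have "leV x (smul g y)" using G by (auto simp: is_glb_def lower_bounds_def)
    then have "{k. leV x (smul k y)} = {k. leK g k}"
    proof (intro set_eqI iffI)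
      fix k assume "k \<in> {k. leV x (smul k y)}"
      then show "k \<in> {k. leK g k}" using g by (auto simp: is_glb_def lower_bounds_def)
    next
      fix k assume "k \<in> {k. leK g k}"
      then have "leV (smul g y) (smul k y)" by (simp add: smul_monoK)
      then show "k \<in> {k. leV x (smul k y)}" using \<open>leV x (smul g y)\<close> leV_trans by blast
    qed
    then show ?thesis by blast
qed simp

lemma alin_R:
  assumes ng: "\<not> is_greatest leV UNIV y"
  shows "a_linear_functional addK mulK addV smul UNIV
           (\<lambda>x. lowK {k. leV x (smul k y)})"
proof (rule generic_alin)
  fix x show "{k. leV x (smul k y)} = {} \<or> (\<exists>r. {k. leV x (smul k y)} = {k. leK r k})"
  proof (cases "{k. leV x (smul k y)} = {}")
    case False
    then obtain g where g: "is_glb leK UNIV {k. leV x (smul k y)} g" using glb_ex[OF False] by blast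
    have G: "is_glb leV UNIV ((\<lambda>q. smul q y) ` {k. leV x (smul k y)}) (smul g y)"
      by (rule bspace_glb[OF False ng g])
    have "leV x (smul g y)" using G by (auto simp: is_glb_def lower_bounds_def)
    then have "{k. leV x (smul k y)} = {k. leK g k}"
    proof (intro set_eqI iffI)
      fix k assume "k \<in> {k. leV x (smul k y)}"
      then show "k \<in> {k. leK g k}" using g by (auto simp: is_glb_def lower_bounds_def)
    next
      fix k assume "k \<in> {k. leK g k}"
      then have "leV (smul g y) (smul k y)" by (simp add: smul_monoK)
      then show "k \<in> {k. leV x (smul k y)}" using \<open>leV x (smul g y)\<close> leV_trans by blast
    qed
    then show ?thesis by blast
  qed simp
next
  fix x z show "{k. leV (addV x z) (smul k y)} = {k. leV x (smul k y)} \<inter> {k. leV z (smul k y)}"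
    by (auto simp: leV_add_iff)
next
  fix k x assume k: "k \<noteq> zeroK"
  show "{m. leV (smul k x) (smul m y)} = mulK k ` {m. leV x (smul m y)}"
  proof (rule set_eqI, rule iffI)
    fix m assume "m \<in> {m. leV (smul k x) (smul m y)}"
    then have "leV (smul (inv k) (smul k x)) (smul (inv k) (smul m y))" by (simp add: smul_monoV)
    then have "leV x (smul (mulK (inv k) m) y)" using k by (simp add: inv_smul_cancel smul_mul)
    moreover have "m = mulK k (mulK (inv k) m)" using k by (simp add: mul_inv_cancel)
    ultimately show "m \<in> mulK k ` {m. leV x (smul m y)}" by blast
  next
    fix m assume "m \<in> mulK k ` {m. leV x (smul m y)}"
    then obtain j where m: "m = mulK k j" and "leV x (smul j y)" by blast
    then have "leV (smul k x) (smul k (smul j y))" by (simp add: smul_monoV)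
    then show "m \<in> {m. leV (smul k x) (smul m y)}" by (simp add: m smul_mul)
  qed
next
  fix x show "zeroK \<in> {k. leV (smul zeroK x) (smul k y)}" by simp
next
  fix X s u assume s: "is_lub leV UNIV X s" and "\<forall>x\<in>X. u \<in> {k. leV x (smul k y)}"
  then show "u \<in> {k. leV s (smul k y)}" using lub_least[OF s] by simp
next
  fix S u z assume S: "upper_bounds leV UNIV S = {}" and "\<forall>x\<in>S. u \<in> {k. leV x (smul k y)}"
  then have "smul u y \<in> upper_bounds leV UNIV S" by (simp add: upper_bounds_def)
  then show "u \<in> {k. leV z (smul k y)}" using S by simp
qed


lemma lowK_empty[simp]: "lowK {} = UNIV" by (simp add: lower_bounds_def)

lemma top_bool: assumes t: "\<forall>c. leK c t" shows "leK k oneK"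
proof (cases "t = zeroK")
  case True
  then have "k = zeroK" using t leK_antisym by auto
  then show ?thesis by simp
next
  case False
  have "leK (mulK t t) t" using t by blast
  then have "leK (mulK (inv t) (mulK t t)) (mulK (inv t) t)" by (rule mulK_monoL)
  then have "leK t oneK" using False by (simp add: inv_mul_cancel inv_l)
  then show ?thesis using t leK_trans by blast
qed

lemma cut_cases: assumes "A \<in> cuts leK UNIV" shows "A = UNIV \<or> (\<exists>m. A = {c. leK c m})"
proof (cases "upK A = {}")
  case True
  then show ?thesis using assms by (simp add: cuts_def)
next
  case False
  then obtain m where m: "is_lub leK UNIV A m" using Kbc assms
    unfolding b_complete_on_def by blast
  have "upK A = {u. leK m u}"
    using m unfolding is_lub_def upper_bounds_def by (auto dest: leK_trans)
  moreover have "lowK {u. leK m u} = {c. leK c m}"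
    by (auto simp: lowK_iff intro: leK_trans)
  ultimately have "A = {c. leK c m}" using assms by (simp add: cuts_def)
  then show ?thesis by blast
qed

lemma lowK_upK_max: "m \<in> S \<Longrightarrow> \<forall>s\<in>S. leK s m \<Longrightarrow> lowK (upK S) = {c. leK c m}"
  by (auto simp: lowK_iff upK_iff) (meson leK_trans)

lemma act_down: "khat_act addK mulK k {c. leK c m} = {c. leK c (mulK k m)}"
  unfolding khat_act_eq by (rule lowK_upK_max) (auto intro: mulK_monoL)

lemma act_sub: "A \<subseteq> {c. leK c oneK} \<Longrightarrow> khat_act addK mulK k A \<subseteq> {c. leK c k}"
proof -
  assume A: "A \<subseteq> {c. leK c oneK}"
  have "k \<in> upK (mulK k ` A)" using A mulK_monoL[of _ oneK k] by (auto simp: upK_iff)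
  then show ?thesis unfolding khat_act_eq by (auto simp: lowK_iff)
qed

lemma sup_sub: "\<forall>A\<in>\<A>. A \<subseteq> {c. leK c m} \<Longrightarrow> khat_sup addK \<A> \<subseteq> {c. leK c m}"
proof -
  assume A: "\<forall>A\<in>\<A>. A \<subseteq> {c. leK c m}"
  have "m \<in> upK (\<Union>\<A>)" using A by (auto simp: upK_iff)
  then show ?thesis unfolding khat_sup_eq by (auto simp: lowK_iff)
qed

lemma sup_sup: "A \<in> \<A> \<Longrightarrow> A \<subseteq> khat_sup addK \<A>"
  unfolding khat_sup_eq by (auto simp: lowK_iff upK_iff)


lemma sep1:
  assumes ab: "\<not> leV a b"
  shows "\<exists>f. a_linear_functional addK mulK addV smul UNIV f \<and> f a \<noteq> f b"
proof (cases "\<forall>k. leK k oneK")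
  case True
  have dinv: "\<forall>k. leV (smul k b) b" using True smul_monoK[of _ oneK b] by simp
  have one: "oneK \<noteq> zeroK"
  proof
    assume "oneK = zeroK"
    then have "a = smul zeroK a" by (metis smul_one)
    then show False using ab leV_zero by metis
  qed
  let ?f = "\<lambda>x. lowK (if leV x b then UNIV else {})"
  have "?f b = {zeroK}" by (simp add: lowK_UNIV)
  moreover have "?f a = UNIV" using ab by simp
  ultimately have "?f a \<noteq> ?f b" using one by auto
  then show ?thesis using alin_D[OF dinv] by blast
next
  case False
  then obtain k0 where k0: "\<not> leK k0 oneK" by blast
  have ng: "\<not> is_greatest leV UNIV b" using ab by (auto simp: is_greatest_def)
  let ?f = "\<lambda>x. lowK {k. leV x (smul k b)}"
  have fb: "?f b \<subseteq> {c. leK c oneK}" by (auto simp: lowK_iff)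
  have "?f a \<noteq> ?f b"
  proof
    assume eq: "?f a = ?f b"
    show False
    proof (cases "{k. leV a (smul k b)} = {}")
      case True
      then have "k0 \<in> ?f a" by simp
      then show False using eq fb k0 by auto
    next
      case False
      then obtain r where r: "{k. leV a (smul k b)} = {k. leK r k}" using R_principal[OF ng, of a] by blast
      then have "r \<in> ?f a" by (simp add: lowK_iff)
      then have "leK r oneK" using eq fb by auto
      moreover have "leV a (smul r b)" using r by auto
      ultimately have "leV a b" using smul_monoK[of r oneK b] leV_trans by auto
      then show False using ab by simp
    qed
  qed
  then show ?thesis using alin_R[OF ng] by blast
qed

lemma sep:
  assumes "x \<noteq> y"
  shows "\<exists>f. a_linear_functional addK mulK addV smul UNIV f \<and> f x \<noteq> f y"
proof (cases "leV x y")
  case True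
  then have "\<not> leV y x" using assms leV_antisym by blast
  then show ?thesis using sep1 by metis
next
  case False
  then show ?thesis using sep1 by blast
qed


lemma f_mono:
  assumes fl: "linear_functional addK mulK addV smul W f" and W: "x \<in> W" "y \<in> W" and le: "leV x y"
  shows "f x \<subseteq> f y"
proof -
  have "f (addV x y) = khat_sup addK {f x, f y}" using fl W by (simp add: linear_functional_def)
  moreover have "addV x y = y" using le by (simp add: idem_le_def)
  ultimately have "f y = khat_sup addK {f x, f y}" by simp
  then show ?thesis using sup_sup[of "f x" "{f x, f y}"] by simp
qed

lemma Dbound:
  assumes Wsub: "b_subspace addV smul W" and fa: "a_linear_functional addK mulK addV smul W f"
    and w1: "w1 \<in> W" "\<not> f w1 \<subseteq> {c. leK c \<beta>}"
  shows "\<exists>y0\<in>W. f y0 \<subseteq> {c. leK c \<beta>} \<and> \<not> leV w1 y0 \<and>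
            (\<forall>w\<in>W. leV w y0 \<longleftrightarrow> f w \<subseteq> {c. leK c \<beta>})"
proof -
  define D where "D = {w\<in>W. f w \<subseteq> {c. leK c \<beta>}}"
  have fl: "linear_functional addK mulK addV smul W f"
    using fa by (simp add: a_linear_functional_def b_linear_functional_def)
  have blin: "\<And>X s. X \<subseteq> W \<Longrightarrow> is_lub leV W X s \<Longrightarrow> f s = khat_sup addK (f ` X)"
    using fa by (simp add: a_linear_functional_def b_linear_functional_def)
  obtain F where F1: "\<forall>x\<in>W. F (principal_cut leV W x) = f x"
    and F2: "\<forall>\<A>. \<A> \<subseteq> cuts leV W \<longrightarrow> F (cut_sup leV W \<A>) = khat_sup addK (F ` \<A>)"
    using fa by (auto simp: a_linear_functional_def)
  have Wbc: "b_complete_on leV W" using Wsub by (simp add: b_subspace_def)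
  have pc_cut: "principal_cut leV W x \<in> cuts leV W" if "x \<in> W" for x
    using that by (auto simp: cuts_def principal_cut_def lower_bounds_def upper_bounds_def)
  have pc_mem: "x \<in> W \<Longrightarrow> x \<in> principal_cut leV W x" for x
    by (simp add: principal_cut_def lower_bounds_def)
  have pc_sub: "principal_cut leV W x \<subseteq> {z\<in>W. leV z x}" for x
    by (auto simp: principal_cut_def lower_bounds_def)
  have ub: "upper_bounds leV W D \<noteq> {}"
  proof
    assume U: "upper_bounds leV W D = {}"
    have cs: "cut_sup leV W (principal_cut leV W ` E) = W" if E: "D \<subseteq> E" "E \<subseteq> W" for E
    proof -
      have "upper_bounds leV W (\<Union>(principal_cut leV W ` E)) \<subseteq> upper_bounds leV W D"
      proof
        fix x assume x: "x \<in> upper_bounds leV W (\<Union>(principal_cut leV W ` E))"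
        have "leV a x" if "a \<in> D" for a
          using x that E pc_mem[of a] by (auto simp: upper_bounds_def)
        then show "x \<in> upper_bounds leV W D" using x by (simp add: upper_bounds_def)
      qed
      then have "upper_bounds leV W (\<Union>(principal_cut leV W ` E)) = {}" using U by blast
      then show ?thesis by (simp add: cut_sup_def lower_bounds_def)
    qed
    have DW: "D \<subseteq> W" by (auto simp: D_def)
    have "principal_cut leV W ` D \<subseteq> cuts leV W" using DW pc_cut by blast
    then have e1: "F (cut_sup leV W (principal_cut leV W ` D)) = khat_sup addK (F ` principal_cut leV W ` D)"
      using F2 by blast
    have "cut_sup leV W (principal_cut leV W ` D) = W" using cs[of D] DW by blast
    then have "F W = khat_sup addK (F ` principal_cut leV W ` D)"
      using e1 by simp
    also have "F ` principal_cut leV W ` D = f ` D" using F1 DW by (force simp: image_image)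
    finally have FW1: "F W = khat_sup addK (f ` D)" .
    have "principal_cut leV W ` insert w1 D \<subseteq> cuts leV W" using DW w1 pc_cut by blast
    then have e2: "F (cut_sup leV W (principal_cut leV W ` insert w1 D)) = khat_sup addK (F ` principal_cut leV W ` insert w1 D)"
      using F2 by blast
    have "cut_sup leV W (principal_cut leV W ` insert w1 D) = W"
      using cs[of "insert w1 D"] DW w1 by blast
    then have "F W = khat_sup addK (F ` principal_cut leV W ` insert w1 D)"
      using e2 by simp
    moreover have "F (principal_cut leV W w1) \<in> F ` principal_cut leV W ` insert w1 D" by blast
    ultimately have "F (principal_cut leV W w1) \<subseteq> F W" using sup_sup by metis
    then have "f w1 \<subseteq> F W" using F1 w1 by simp
    moreover have "F W \<subseteq> {c. leK c \<beta>}" unfolding FW1 by (rule sup_sub) (auto simp: D_def)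
    ultimately show False using w1 by blast
  qed
  have DW0: "D \<subseteq> W" by (auto simp: D_def)
  obtain y0 where y0: "is_lub leV W D y0"
    using Wbc ub DW0 unfolding b_complete_on_def by blast
  have y0W: "y0 \<in> W" using y0 by (simp add: is_lub_def upper_bounds_def)
  have fy0: "f y0 \<subseteq> {c. leK c \<beta>}"
  proof -
    have "f y0 = khat_sup addK (f ` D)" using blin[OF DW0 y0] .
    moreover have "\<forall>A\<in>f ` D. A \<subseteq> {c. leK c \<beta>}" by (auto simp: D_def)
    ultimately show ?thesis using sup_sub by simp
  qed
  have eqv: "leV w y0 \<longleftrightarrow> f w \<subseteq> {c. leK c \<beta>}" if w: "w \<in> W" for w
  proof
    assume "leV w y0" then show "f w \<subseteq> {c. leK c \<beta>}" using f_mono[OF fl w y0W] fy0 by blast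
  next
    assume "f w \<subseteq> {c. leK c \<beta>}"
    then have "w \<in> D" using w by (simp add: D_def)
    then show "leV w y0" using y0 by (simp add: is_lub_def upper_bounds_def)
  qed
  have "\<not> leV w1 y0" using eqv[OF w1(1)] w1(2) by blast
  then show ?thesis using y0W fy0 eqv by blast
qed


lemma down_zero: "{c. leK c zeroK} = {zeroK}"
  using leK_antisym by auto

lemma ext:
  assumes Wsub: "b_subspace addV smul W" and fa: "a_linear_functional addK mulK addV smul W f"
  shows "\<exists>g. a_linear_functional addK mulK addV smul UNIV g \<and> (\<forall>x\<in>W. g x = f x)"
proof -
  have fl: "linear_functional addK mulK addV smul W f"
    using fa by (simp add: a_linear_functional_def b_linear_functional_def)
  have fcut: "x \<in> W \<Longrightarrow> f x \<in> cuts leK UNIV" for x using fl by (simp add: linear_functional_def)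
  have fsm: "x \<in> W \<Longrightarrow> f (smul k x) = khat_act addK mulK k (f x)" for k x
    using fl by (simp add: linear_functional_def)
  have Wsm: "x \<in> W \<Longrightarrow> smul k x \<in> W" for k x using Wsub by (simp add: b_subspace_def)
  have f0: "x \<in> W \<Longrightarrow> zeroK \<in> f x" for x
    using fcut[of x] by (auto simp: cuts_def lower_bounds_def)
  show ?thesis
  proof (cases "\<forall>w\<in>W. f w = {zeroK}")
    case True
    then show ?thesis using alin_zero by (metis lowK_UNIV)
  next
    case False
    then obtain w0 where w0: "w0 \<in> W" "f w0 \<noteq> {zeroK}" by blast
    show ?thesis
    proof (cases "\<forall>k. leK k oneK")
      case Bool: True
      have "\<not> f w0 \<subseteq> {c. leK c zeroK}" using w0 f0[OF w0(1)] down_zero by auto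
      then obtain y0 where y0: "y0 \<in> W" "f y0 \<subseteq> {c. leK c zeroK}"
        and eqv: "\<forall>w\<in>W. leV w y0 \<longleftrightarrow> f w \<subseteq> {c. leK c zeroK}"
        using Dbound[OF Wsub fa w0(1)] by blast
      have dinv: "\<forall>k. leV (smul k y0) y0" using Bool smul_monoK[of _ oneK y0] by simp
      have agree: "lowK (if leV w y0 then UNIV else {}) = f w" if w: "w \<in> W" for w
      proof (cases "leV w y0")
        case True
        then have "f w = {zeroK}" using eqv w f0[OF w] down_zero by auto
        then show ?thesis using True by (simp add: lowK_UNIV)
      next
        case False
        then have nz: "\<not> f w \<subseteq> {c. leK c zeroK}" using eqv w by blast
        have "f w = UNIV"
        proof (cases "f w = UNIV")
          case False
          then obtain m where m: "f w = {c. leK c m}" using cut_cases[OF fcut[OF w]] by blast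
          have mz: "m \<noteq> zeroK" using nz m by auto
          have "leK (mulK m (inv m)) (mulK m oneK)" using Bool mulK_monoL by blast
          then have "leK oneK m" using mz by (simp add: inv_r)
          then have "\<forall>c. leK c m" using Bool leK_trans by blast
          then show ?thesis using m by auto
        qed
        then show ?thesis using False by simp
      qed
      then show ?thesis using alin_D[OF dinv] by blast
    next
      case NB: False
      then obtain k0 where k0: "\<not> leK k0 oneK" by blast
      have "\<exists>w1\<in>W. \<not> f w1 \<subseteq> {c. leK c oneK}"
      proof (rule ccontr)
        assume "\<not> ?thesis"
        then have all: "\<forall>w\<in>W. f w \<subseteq> {c. leK c oneK}" by blast
        show False
        proof (cases "f w0 = UNIV")
          case True then show False using all w0 k0 by auto
        next
          case False
          then obtain m where m: "f w0 = {c. leK c m}" using cut_cases[OF fcut[OF w0(1)]] by blast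
          have mz: "m \<noteq> zeroK" using m w0 down_zero by auto
          have "f (smul (mulK k0 (inv m)) w0) = {c. leK c (mulK (mulK k0 (inv m)) m)}"
            using fsm[OF w0(1)] m act_down by simp
          also have "mulK (mulK k0 (inv m)) m = k0" using mz by (simp add: mulK_assoc inv_l)
          finally have "k0 \<in> f (smul (mulK k0 (inv m)) w0)" by simp
          then show False using all Wsm[OF w0(1)] k0 by blast
        qed
      qed
      then obtain w1 where w1: "w1 \<in> W" "\<not> f w1 \<subseteq> {c. leK c oneK}" by blast
      then obtain y0 where y0: "y0 \<in> W" "f y0 \<subseteq> {c. leK c oneK}" "\<not> leV w1 y0"
        and eqv: "\<forall>w\<in>W. leV w y0 \<longleftrightarrow> f w \<subseteq> {c. leK c oneK}"
        using Dbound[OF Wsub fa w1] by blast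
      have ng: "\<not> is_greatest leV UNIV y0" using y0(3) by (auto simp: is_greatest_def)
      have bound: "f w \<subseteq> {c. leK c k}" if w: "w \<in> W" and le: "leV w (smul k y0)" for w k
      proof -
        have "f w \<subseteq> f (smul k y0)" using f_mono[OF fl w Wsm[OF y0(1)] le] .
        also have "\<dots> = khat_act addK mulK k (f y0)" using fsm[OF y0(1)] .
        also have "\<dots> \<subseteq> {c. leK c k}" using act_sub[OF y0(2)] .
        finally show ?thesis .
      qed
      have agree: "lowK {k. leV w (smul k y0)} = f w" if w: "w \<in> W" for w
      proof (cases "f w = UNIV")
        case True
        have "{k. leV w (smul k y0)} = {}"
        proof (rule ccontr)
          assume "{k. leV w (smul k y0)} \<noteq> {}"
          then obtain k where "leV w (smul k y0)" by blast
          then have "\<forall>c. leK c k" using bound[OF w] True by blast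
          then show False using top_bool k0 by blast
        qed
        then show ?thesis using True by simp
      next
        case False
        then obtain m where m: "f w = {c. leK c m}" using cut_cases[OF fcut[OF w]] by blast
        show ?thesis
        proof (rule set_eqI, rule iffI)
          fix c assume c: "c \<in> lowK {k. leV w (smul k y0)}"
          show "c \<in> f w"
          proof (cases "m = zeroK")
            case False
            have "f (smul (inv m) w) = {c. leK c oneK}"
              using fsm[OF w] m act_down False by (simp add: inv_l)
            then have "leV (smul (inv m) w) y0" using eqv Wsm[OF w] by auto
            then have "leV (smul m (smul (inv m) w)) (smul m y0)" by (rule smul_monoV)
            then have "leV w (smul m y0)" using False by (simp add: smul_inv_cancel)
            then have "leK c m" using c by (simp add: lowK_iff)
            then show ?thesis using m by simp
          next
            case True
            have ck: "leK c k" if kz: "k \<noteq> zeroK" for k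
            proof -
              have "f (smul (inv k) w) = {c. leK c zeroK}"
                using fsm[OF w] m act_down True by simp
              then have "leV (smul (inv k) w) y0" using eqv Wsm[OF w] down_zero by auto
              then have "leV (smul k (smul (inv k) w)) (smul k y0)" by (rule smul_monoV)
              then have "leV w (smul k y0)" using kz by (simp add: smul_inv_cancel)
              then show "leK c k" using c by (simp add: lowK_iff)
            qed
            have "c = zeroK"
            proof (rule ccontr)
              assume cz: "c \<noteq> zeroK"
              have k0z: "k0 \<noteq> zeroK" using k0 by auto
              have iz: "inv k0 \<noteq> zeroK" using inv_nz[OF k0z] .
              have "mulK c (inv k0) \<noteq> zeroK"
                using cz iz by (metis inv_mul_cancel zero_r)
              then have "leK c (mulK c (inv k0))" using ck by blast
              then have "leK (mulK (inv c) c) (mulK (inv c) (mulK c (inv k0)))" by (rule mulK_monoL)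
              then have "leK oneK (inv k0)" using cz by (simp add: inv_l inv_mul_cancel)
              then have "leK (mulK oneK k0) (mulK (inv k0) k0)" by (rule mulK_monoR)
              then have "leK k0 oneK" using k0z by (simp add: inv_l)
              then show False using k0 by simp
            qed
            then show ?thesis using f0[OF w] by simp
          qed
        next
          fix c assume "c \<in> f w"
          then have cm: "leK c m" using m by simp
          show "c \<in> lowK {k. leV w (smul k y0)}"
          proof (unfold lowK_iff, intro ballI)
            fix k assume "k \<in> {k. leV w (smul k y0)}"
            then have "f w \<subseteq> {c. leK c k}" using bound[OF w] by simp
            then have "leK m k" using m by auto
            then show "leK c k" using cm leK_trans by blast
          qed
        qed
      qed
      then show ?thesis using alin_R[OF ng] by blast
    qed
  qed
qed

end

theorem theorem7p3:
  fixes addK mulK :: "'k \<Rightarrow> 'k \<Rightarrow> 'k" and zeroK oneK :: 'k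
    and addV :: "'v \<Rightarrow> 'v \<Rightarrow> 'v" and smul :: "'k \<Rightarrow> 'v \<Rightarrow> 'v"
  assumes K: "b_complete_semiring addK mulK zeroK oneK"
    and SF: "semifield mulK zeroK oneK"
    and V: "b_space addK mulK zeroK oneK addV smul"
  shows "(\<forall>W f. b_subspace addV smul W \<longrightarrow> a_linear_functional addK mulK addV smul W f \<longrightarrow>
            (\<exists>g. a_linear_functional addK mulK addV smul UNIV g \<and> (\<forall>x\<in>W. g x = f x)))
       \<and> (\<forall>x y. x \<noteq> y \<longrightarrow>
            (\<exists>f. a_linear_functional addK mulK addV smul UNIV f \<and> f x \<noteq> f y))"
proof -
  interpret ctx addK mulK zeroK oneK addV smul using K SF V by unfold_locales
  show ?thesis using ext sep by blast
qed

end
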